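(* Let $C,A^1,\dots,A^m\in\mathbb{S}^n$, $b\in\mathbb{R}^m$, with $\mathbf{P}$ and $\mathbf{D}$ feasible and $\mathbf{D}$ of singularity degree one, and let $0\le r<n$ be such that, writing $L(y)=C-\sum_iA^iy_i$ in blocks $L_{11}(y)\in\mathbb{S}^r$, $L_{12}(y)\in\mathbb{R}^{r\times(n-r)}$, $L_{22}(y)\in\mathbb{S}^{n-r}$: (a) for every $y$, $L(y)\succeq0$ iff $L_{12}(y)=0$, $L_{22}(y)=0$, $L_{11}(y)\succeq0$; (b) some $y$ has $L_{12}(y)=0$, $L_{22}(y)=0$, $L_{11}(y)\succ0$; (c) there is $X=\mathrm{diag}(0,X_{22})$ with $X_{22}\succ0$, $C\bullet X=0$, $A^i\bullet X=0$ for all $i$. Let $M>0$ be a constant such that for all $t\ge0$ and $y$, $L_{22}(y)+tI_{22}\succeq0$ implies $tMI_{22}\succeq L_{22}(y)+tI_{22}$, and set $K:=M(v(\mathbf{P})-v(\mathbf{D})+2)$. For $\alpha>0$, $t>0$ let $u_2(\alpha,t)$ be the optimal value (supremum) of $$\mathbf{RD2}(\alpha,t):\ \max_y\ b^Ty\ \text{ s.t. } L(y)+t\alpha I\succeq0,\ \ \|L_{12}(y)\|_F^2\le K\alpha .$$ Then for every $\alpha>0$, the limit $\bar u(\alpha):=\lim_{t\downarrow0}u_2(\alpha,t)$ exists and is finite.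
   Context: $\mathbf{P}$: $\min_X C\bullet X$ s.t. $A^i\bullet X=b_i$, $X\succeq0$; $\mathbf{D}$: $\max_y b^Ty$ s.t. $C-\sum_iA^iy_i\succeq0$; $v(\mathbf{P}),v(\mathbf{D})$ are their (finite) optimal values. $\mathbf{D}$ has singularity degree one if it is feasible and there exists a nonzero $X\succeq0$ with $C\bullet X=0$, $A^i\bullet X=0$ for all $i$, such that some $y$ has $C-\sum_iA^iy_i$ in the relative interior of $\{Z\succeq0: Z\bullet X=0\}$. $\|\cdot\|_F$ is the Frobenius norm; $I_{22}$ is the $(n-r)\times(n-r)$ identity. *)

theory Defs
  imports "HOL-Analysis.Analysis"
begin

text \<open>Square real matrices indexed by a finite linearly ordered type 'n (so n = CARD('n)).
  Constraint index i ranges over i < m; y and b are functions nat => real, only i < m used.\<close>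

definition symm :: "real^'n^'n \<Rightarrow> bool" where
  "symm X \<longleftrightarrow> transpose X = X"

definition psd :: "real^'n^'n \<Rightarrow> bool" where
  "psd X \<longleftrightarrow> symm X \<and> (\<forall>x. 0 \<le> x \<bullet> (X *v x))"

definition frob :: "real^'n^'n \<Rightarrow> real^'n^'n \<Rightarrow> real" where
  "frob A B = (\<Sum>i\<in>UNIV. \<Sum>j\<in>UNIV. A$i$j * B$i$j)"

definition psd_block :: "'n set \<Rightarrow> real^'n^'n \<Rightarrow> bool" where
  "psd_block S X \<longleftrightarrow> (\<forall>i\<in>S. \<forall>j\<in>S. X$i$j = X$j$i) \<and>
     (\<forall>x. (\<forall>i. i \<notin> S \<longrightarrow> x$i = 0) \<longrightarrow> 0 \<le> x \<bullet> (X *v x))"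

definition pd_block :: "'n set \<Rightarrow> real^'n^'n \<Rightarrow> bool" where
  "pd_block S X \<longleftrightarrow> (\<forall>i\<in>S. \<forall>j\<in>S. X$i$j = X$j$i) \<and>
     (\<forall>x. (\<forall>i. i \<notin> S \<longrightarrow> x$i = 0) \<longrightarrow> x \<noteq> 0 \<longrightarrow> 0 < x \<bullet> (X *v x))"

text \<open>The first r indices (w.r.t. the linear order of 'n): block 1 of size r.\<close>
definition first_idx :: "nat \<Rightarrow> ('n::{finite,linorder}) set" where
  "first_idx r = {i. card {j. j < i} < r}"

definition Lmap :: "real^'n^'n \<Rightarrow> (nat \<Rightarrow> real^'n^'n) \<Rightarrow> nat \<Rightarrow> (nat \<Rightarrow> real) \<Rightarrow> real^'n^'n" where
  "Lmap C A m y = C - (\<Sum>i<m. y i *\<^sub>R A i)"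

definition primal_feasible :: "real^'n^'n \<Rightarrow> (nat \<Rightarrow> real^'n^'n) \<Rightarrow> nat \<Rightarrow> (nat \<Rightarrow> real) \<Rightarrow> real^'n^'n \<Rightarrow> bool" where
  "primal_feasible C A m b X \<longleftrightarrow> psd X \<and> (\<forall>i<m. frob (A i) X = b i)"

definition dual_feasible :: "real^'n^'n \<Rightarrow> (nat \<Rightarrow> real^'n^'n) \<Rightarrow> nat \<Rightarrow> (nat \<Rightarrow> real) \<Rightarrow> bool" where
  "dual_feasible C A m y \<longleftrightarrow> psd (Lmap C A m y)"

definition vP :: "real^'n^'n \<Rightarrow> (nat \<Rightarrow> real^'n^'n) \<Rightarrow> nat \<Rightarrow> (nat \<Rightarrow> real) \<Rightarrow> ereal" where
  "vP C A m b = (INF X\<in>{X. primal_feasible C A m b X}. ereal (frob C X))"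

definition vD :: "real^'n^'n \<Rightarrow> (nat \<Rightarrow> real^'n^'n) \<Rightarrow> nat \<Rightarrow> (nat \<Rightarrow> real) \<Rightarrow> ereal" where
  "vD C A m b = (SUP y\<in>{y. dual_feasible C A m y}. ereal (\<Sum>i<m. b i * y i))"

definition sing_deg_one :: "real^'n^'n \<Rightarrow> (nat \<Rightarrow> real^'n^'n) \<Rightarrow> nat \<Rightarrow> bool" where
  "sing_deg_one C A m \<longleftrightarrow> (\<exists>y. dual_feasible C A m y) \<and>
     (\<exists>X. X \<noteq> 0 \<and> psd X \<and> frob C X = 0 \<and> (\<forall>i<m. frob (A i) X = 0) \<and>
        (\<exists>y. Lmap C A m y \<in> rel_interior {Z. psd Z \<and> frob Z X = 0}))"

definition offblock_sq :: "'n set \<Rightarrow> real^'n^'n \<Rightarrow> real" where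
  "offblock_sq S X = (\<Sum>i\<in>S. \<Sum>j\<in>-S. (X$i$j)^2)"

definition u2 :: "real^'n^'n \<Rightarrow> (nat \<Rightarrow> real^'n^'n) \<Rightarrow> nat \<Rightarrow> (nat \<Rightarrow> real) \<Rightarrow> 'n set \<Rightarrow> real \<Rightarrow> real \<Rightarrow> real \<Rightarrow> ereal" where
  "u2 C A m b S K \<alpha> t = (SUP y\<in>{y. psd (Lmap C A m y + (t * \<alpha>) *\<^sub>R mat 1) \<and>
        offblock_sq S (Lmap C A m y) \<le> K * \<alpha>}. ereal (\<Sum>i<m. b i * y i))"

end

theory Submission
  imports Defs
begin

lemma quad_expand:
  fixes X :: "real^'n^'n" and u v :: "real^'n"
  assumes "symm X"
  shows "(u + s *\<^sub>R v) \<bullet> (X *v (u + s *\<^sub>R v)) =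
    u \<bullet> (X *v u) + 2 * s * (v \<bullet> (X *v u)) + s^2 * (v \<bullet> (X *v v))"
proof -
  have sym: "u \<bullet> (X *v v) = v \<bullet> (X *v u)"
  proof -
    have "u \<bullet> (X *v v) = (u v* X) \<bullet> v" by (simp add: dot_lmul_matrix)
    also have "u v* X = transpose X *v u" by (simp add: transpose_matrix_vector)
    also have "\<dots> = X *v u" using assms by (simp add: symm_def)
    finally show ?thesis by (simp add: inner_commute)
  qed
  show ?thesis
    by (simp add: algebra_simps inner_add_left inner_add_right sym power2_eq_square)
qed

lemma quad_nonneg_real:
  fixes a b c :: real
  assumes "\<forall>s. 0 \<le> a + 2 * s * b + s^2 * c"
  shows "b^2 \<le> a * c"
proof (cases "c = 0")
  case True
  show ?thesis
  proof (cases "b = 0")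
    case True then show ?thesis using assms[rule_format, of 0] \<open>c = 0\<close> by simp
  next
    case False
    have "0 \<le> a + 2 * (-(a+1)/(2*b)) * b" using assms[rule_format, of "-(a+1)/(2*b)"] True by simp
    also have "\<dots> = -1" using False by (simp add: field_simps)
    finally show ?thesis by simp
  qed
next
  case False
  have c0: "c \<ge> 0"
  proof (rule ccontr)
    assume "\<not> c \<ge> 0"
    hence cn: "c < 0" by simp
    define k where "k = abs a + 2 * abs b + 1"
    define s where "s = k / (-c) + 1"
    have "k / (- c) \<ge> 0" using cn unfolding k_def by (intro divide_nonneg_pos) auto
    hence s1: "s \<ge> 1" unfolding s_def by linarith
    have sK: "s * (-c) = k + (-c)" unfolding s_def using cn by (simp add: field_simps)
    have "s^2 * (-c) = s * (s * (-c))" by (simp add: power2_eq_square)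
    also have "\<dots> \<ge> s * k" using sK cn s1 by (intro mult_left_mono) auto
    finally have A1: "s^2 * (-c) \<ge> s * k" .
    have "s * abs a \<ge> abs a" using s1 by (simp add: mult_right_mono[of 1 s "abs a", simplified])
    hence A2: "s * k \<ge> abs a + 2 * s * abs b + 1" unfolding k_def using s1 by (simp add: algebra_simps)
    have "a \<le> abs a" by simp
    moreover have "s * b \<le> s * abs b" using s1 by (intro mult_left_mono) auto
    ultimately have A3: "a + 2 * s * b \<le> abs a + 2 * s * abs b" by linarith
    from A1 A2 A3 have "a + 2 * s * b + s^2 * c < 0" by linarith
    thus False using assms by (meson not_le)
  qed
  hence cp: "c > 0" using False by simp
  have "0 \<le> a + 2 * (-b/c) * b + (-b/c)^2 * c" using assms by blast
  also have "\<dots> = a - b^2 / c" using cp by (simp add: field_simps power2_eq_square)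
  finally have "b^2 / c \<le> a" by simp
  thus ?thesis using cp by (simp add: field_simps mult.commute)
qed

lemma psd_cs:
  fixes X :: "real^'n^'n" and u v :: "real^'n"
  assumes "psd X"
  shows "(v \<bullet> (X *v u))^2 \<le> (u \<bullet> (X *v u)) * (v \<bullet> (X *v v))"
proof -
  have "\<forall>s. 0 \<le> u \<bullet> (X *v u) + 2 * s * (v \<bullet> (X *v u)) + s^2 * (v \<bullet> (X *v v))"
    using assms quad_expand[of X u _ v] unfolding psd_def by metis
  thus ?thesis by (rule quad_nonneg_real)
qed


lemma frob_diff2: "frob Z (A - B) = frob Z A - frob Z B"
  by (simp add: frob_def sum_subtractf algebra_simps)

lemma frob_add2: "frob Z (A + B) = frob Z A + frob Z B"
  by (simp add: frob_def sum.distrib algebra_simps)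

lemma frob_scale2: "frob Z (c *\<^sub>R A) = c * frob Z A"
  by (simp add: frob_def sum_distrib_left algebra_simps)

lemma frob_comm: "frob A B = frob B A"
  by (simp add: frob_def mult.commute)

lemma quad_sum: "(x::real^'n) \<bullet> (X *v x) = (\<Sum>i\<in>UNIV. \<Sum>j\<in>UNIV. X$i$j * x$i * x$j)"
  by (simp add: inner_vec_def matrix_vector_mult_def sum_distrib_left algebra_simps)

lemma axis_inner1: "axis p 1 \<bullet> (v::real^'n) = v$p"
  by (simp add: cart_eq_inner_axis inner_commute)

lemma scaleR_mv: "((a::real) *\<^sub>R (M::real^'n^'m)) *v x = a *\<^sub>R (M *v x)"
  by (simp add: vec_eq_iff matrix_vector_mult_def sum_distrib_left algebra_simps)

lemma psd_diag_zero:
  fixes X :: "real^'n^'n"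
  assumes "psd X" "X$p$p = 0"
  shows "X$p$j = 0"
proof -
  have "(axis j 1 \<bullet> (X *v axis p 1))^2 \<le> (axis p 1 \<bullet> (X *v axis p 1)) * (axis j 1 \<bullet> (X *v axis j 1))"
    using psd_cs[OF assms(1)] by blast
  moreover have "axis p 1 \<bullet> (X *v axis p 1) = X$p$p"
    by (simp add: matrix_vector_mult_basis column_def axis_inner1)
  moreover have "axis j 1 \<bullet> (X *v axis p 1) = X$j$p"
    by (simp add: matrix_vector_mult_basis column_def axis_inner1)
  moreover have "X$j$p = X$p$j" using assms(1) unfolding psd_def symm_def
    by (metis transpose_def vec_lambda_beta)
  ultimately show ?thesis using assms(2) by simp
qed

lemma psd_selfdual_aux:
  fixes Z X :: "real^'n^'n"
  assumes Z: "psd Z"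
  shows "finite S \<Longrightarrow> psd X \<Longrightarrow> (\<forall>i j. i \<notin> S \<longrightarrow> X$i$j = 0) \<Longrightarrow> 0 \<le> frob Z X"
proof (induction S arbitrary: X rule: finite_induct)
  case empty
  then show ?case by (simp add: frob_def)
next
  case (insert p S)
  have symX: "\<And>i j. X$j$i = X$i$j" using insert.prems(1) unfolding psd_def symm_def
    by (metis transpose_def vec_lambda_beta)
  show ?case
  proof (cases "X$p$p = 0")
    case True
    hence "\<forall>j. X$p$j = 0" using psd_diag_zero[OF insert.prems(1)] by blast
    hence "\<forall>i j. i \<notin> S \<longrightarrow> X$i$j = 0" using insert.prems(2) by auto
    thus ?thesis using insert.IH insert.prems(1) by blast
  next
    case False
    define c where "c = X$p$p"
    have "0 \<le> axis p 1 \<bullet> (X *v axis p 1)" using insert.prems(1) unfolding psd_def by blast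
    hence "c \<ge> 0" unfolding c_def by (simp add: matrix_vector_mult_basis column_def axis_inner1)
    hence cp: "c > 0" using False c_def by simp
    define col where "col = column p X"
    define Qm :: "real^'n^'n" where "Qm = (\<chi> i j. col$i * col$j)"
    define X' where "X' = X - (1/c) *\<^sub>R Qm"
    have colx: "col$i = X$i$p" for i by (simp add: col_def column_def)
    have Ov: "Qm *v x = (col \<bullet> x) *\<^sub>R col" for x
      by (simp add: vec_eq_iff Qm_def matrix_vector_mult_def inner_vec_def sum_distrib_left algebra_simps)
    have symO: "transpose Qm = Qm" by (simp add: vec_eq_iff Qm_def transpose_def mult.commute)
    have symX': "symm X'"
      unfolding symm_def vec_eq_iff transpose_def X'_def Qm_def
      by (simp add: symX mult.commute)
    have quadX': "x \<bullet> (X' *v x) = x \<bullet> (X *v x) - (1/c) * (col \<bullet> x)^2" for x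
      by (simp add: X'_def algebra_simps scaleR_mv Ov inner_commute power2_eq_square)
    have colXx: "col \<bullet> x = x \<bullet> (X *v axis p 1)" for x
      by (simp add: col_def matrix_vector_mult_basis inner_commute)
    have "x \<bullet> (X' *v x) \<ge> 0" for x
    proof -
      have cs: "(x \<bullet> (X *v axis p 1))^2 \<le> (axis p 1 \<bullet> (X *v axis p 1)) * (x \<bullet> (X *v x))"
        using psd_cs[OF insert.prems(1)] by blast
      have "axis p 1 \<bullet> (X *v axis p 1) = c"
        by (simp add: c_def matrix_vector_mult_basis column_def axis_inner1)
      hence "(col \<bullet> x)^2 / c \<le> x \<bullet> (X *v x)" using cs colXx cp
        by (simp add: divide_le_eq mult.commute)
      thus ?thesis using quadX' by simp
    qed
    hence psdX': "psd X'" using symX' by (simp add: psd_def)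
    have X'e: "X'$i$j = X$i$j - (1/c) * (X$i$p * X$j$p)" for i j
      by (simp add: X'_def Qm_def colx)
    have "\<forall>i j. i \<notin> S \<longrightarrow> X'$i$j = 0"
    proof (intro allI impI)
      fix i j assume iS: "i \<notin> S"
      show "X'$i$j = 0"
      proof (cases "i = p")
        case True
        thus ?thesis using cp by (simp add: X'e c_def symX[of j p])
      next
        case False
        thus ?thesis using iS insert.prems(2) by (simp add: X'e)
      qed
    qed
    hence f1: "0 \<le> frob Z X'" using insert.IH psdX' by blast
    have "frob Z Qm = col \<bullet> (Z *v col)"
      by (simp add: frob_def Qm_def quad_sum algebra_simps)
    hence f2: "0 \<le> frob Z Qm" using Z unfolding psd_def by simp
    have "X = X' + (1/c) *\<^sub>R Qm" by (simp add: X'_def)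
    hence "frob Z X = frob Z X' + (1/c) * frob Z Qm" by (simp add: frob_add2 frob_scale2)
    thus ?thesis using f1 f2 cp by simp
  qed
qed

lemma psd_selfdual:
  fixes Z X :: "real^'n^'n"
  assumes "psd Z" "psd X"
  shows "0 \<le> frob Z X"
  using psd_selfdual_aux[OF assms(1), of UNIV X] assms(2) by simp


lemma frob_sum1: "frob (sum f S) X = (\<Sum>k\<in>S. frob (f k) X)"
proof (induction S rule: infinite_finite_induct)
  case (insert x F)
  then show ?case using frob_add2[of X "f x" "sum f F"] by (simp add: frob_comm)
qed (simp_all add: frob_def)

lemma bty_eq:
  assumes "primal_feasible C A m b X"
  shows "(\<Sum>i<m. b i * y i) = frob C X - frob (Lmap C A m y) X"
proof -
  have "frob (Lmap C A m y) X = frob C X - frob (\<Sum>i<m. y i *\<^sub>R A i) X"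
    unfolding Lmap_def using frob_diff2[of X C] by (simp add: frob_comm)
  also have "frob (\<Sum>i<m. y i *\<^sub>R A i) X = (\<Sum>i<m. y i * frob (A i) X)"
    unfolding frob_sum1 using frob_scale2 frob_comm by metis
  also have "\<dots> = (\<Sum>i<m. b i * y i)"
    using assms unfolding primal_feasible_def by (simp add: mult.commute)
  finally show ?thesis by simp
qed

lemma psd_add_id:
  assumes "psd Z" "s \<ge> 0"
  shows "psd (Z + s *\<^sub>R mat 1)"
proof -
  have "symm (Z + s *\<^sub>R mat 1)" using assms(1)
    unfolding psd_def symm_def by (simp add: vec_eq_iff transpose_def mat_def)
  moreover have "0 \<le> x \<bullet> ((Z + s *\<^sub>R mat 1) *v x)" for x
  proof -
    have "x \<bullet> ((Z + s *\<^sub>R mat 1) *v x) = x \<bullet> (Z *v x) + s * (x \<bullet> x)"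
      by (simp add: matrix_vector_mult_add_rdistrib scaleR_mv inner_add_right)
    thus ?thesis using assms unfolding psd_def by simp
  qed
  ultimately show ?thesis by (simp add: psd_def)
qed

lemma psd_shift:
  assumes "psd (Z + s1 *\<^sub>R mat 1)" "s1 \<le> s2"
  shows "psd (Z + s2 *\<^sub>R mat 1)"
proof -
  have "Z + s2 *\<^sub>R mat 1 = (Z + s1 *\<^sub>R mat 1) + (s2 - s1) *\<^sub>R mat 1"
    by (simp add: algebra_simps)
  thus ?thesis using psd_add_id[OF assms(1), of "s2 - s1"] assms(2) by (metis diff_ge_0_iff_ge)
qed

theorem lemma5:
  fixes C :: "real^('n::{finite,linorder})^('n::{finite,linorder})" and A :: "nat \<Rightarrow> real^('n::{finite,linorder})^('n::{finite,linorder})"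
    and m :: nat and b :: "nat \<Rightarrow> real" and r :: nat and M :: real
  defines "R \<equiv> (first_idx r :: ('n::{finite,linorder}) set)"
  defines "L \<equiv> Lmap C A m"
  defines "K \<equiv> M * (real_of_ereal (vP C A m b) - real_of_ereal (vD C A m b) + 2)"
  assumes symC: "symm C" and symA: "\<forall>i<m. symm (A i)"
    and Pfeas: "\<exists>X. primal_feasible C A m b X"
    and Dfeas: "\<exists>y. dual_feasible C A m y"
    and vP_fin: "\<bar>vP C A m b\<bar> \<noteq> \<infinity>" and vD_fin: "\<bar>vD C A m b\<bar> \<noteq> \<infinity>"
    and sd1: "sing_deg_one C A m"
    and r_lt: "r < CARD('n::{finite,linorder})"
    and cond_a: "\<forall>y. psd (L y) \<longleftrightarrow>
        ((\<forall>i\<in>R. \<forall>j\<in>-R. L y $ i $ j = 0) \<and> (\<forall>i\<in>-R. \<forall>j\<in>-R. L y $ i $ j = 0)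
         \<and> psd_block R (L y))"
    and cond_b: "\<exists>y. (\<forall>i\<in>R. \<forall>j\<in>-R. L y $ i $ j = 0) \<and> (\<forall>i\<in>-R. \<forall>j\<in>-R. L y $ i $ j = 0)
         \<and> pd_block R (L y)"
    and cond_c: "\<exists>X. (\<forall>i j. (i \<in> R \<or> j \<in> R) \<longrightarrow> X $ i $ j = 0) \<and> pd_block (-R) X
         \<and> frob C X = 0 \<and> (\<forall>i<m. frob (A i) X = 0)"
    and M_pos: "M > 0"
    and M_bound: "\<forall>t y. t \<ge> 0 \<longrightarrow> psd_block (-R) (L y + t *\<^sub>R mat 1) \<longrightarrow>
        psd_block (-R) ((t * M) *\<^sub>R mat 1 - (L y + t *\<^sub>R mat 1))"
  shows "\<forall>\<alpha>>0. \<exists>l::real. ((\<lambda>t. u2 C A m b R K \<alpha> t) \<longlongrightarrow> ereal l) (at_right 0)"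
  proof (intro allI impI)
  fix \<alpha> :: real assume ap: "\<alpha> > 0"
  define f where "f t = u2 C A m b R K \<alpha> t" for t
  define F where "F t = {y. psd (Lmap C A m y + (t * \<alpha>) *\<^sub>R mat 1) \<and>
        offblock_sq R (Lmap C A m y) \<le> K * \<alpha>}" for t
  have fF: "f t = (SUP y\<in>F t. ereal (\<Sum>i<m. b i * y i))" for t
    unfolding f_def F_def u2_def by simp
  obtain X0 where X0: "primal_feasible C A m b X0" using Pfeas by blast
  obtain y0 where y0: "dual_feasible C A m y0" using Dfeas by blast
  have wd: "(\<Sum>i<m. b i * y i) \<le> frob C X" if "primal_feasible C A m b X" "dual_feasible C A m y" for X y
    using bty_eq[OF that(1), of y] psd_selfdual[of "Lmap C A m y" X] that
    unfolding primal_feasible_def dual_feasible_def by simp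
  have "vD C A m b \<le> vP C A m b"
    unfolding vD_def vP_def
  proof (rule SUP_least, rule INF_greatest)
    fix y X assume "y \<in> {y. dual_feasible C A m y}" "X \<in> {X. primal_feasible C A m b X}"
    thus "ereal (\<Sum>i<m. b i * y i) \<le> ereal (frob C X)" using wd by simp
  qed
  moreover obtain p where p: "vP C A m b = ereal p" using vP_fin by (cases "vP C A m b") auto
  moreover obtain d where d: "vD C A m b = ereal d" using vD_fin by (cases "vD C A m b") auto
  ultimately have "d \<le> p" by simp
  hence Kpos: "K > 0" unfolding K_def using p d M_pos by simp
  have y0F: "y0 \<in> F t" if "t > 0" for t
  proof -
    have "psd (L y0)" using y0 unfolding dual_feasible_def L_def by simp
    hence "\<forall>i\<in>R. \<forall>j\<in>-R. L y0 $ i $ j = 0" using cond_a by blast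
    hence "offblock_sq R (Lmap C A m y0) = 0" unfolding offblock_sq_def L_def by simp
    moreover have "psd (Lmap C A m y0 + (t * \<alpha>) *\<^sub>R mat 1)"
      using psd_add_id[of "Lmap C A m y0" "t * \<alpha>"] y0 that ap unfolding dual_feasible_def by simp
    ultimately show ?thesis unfolding F_def using Kpos ap by simp
  qed
  have lower: "ereal (\<Sum>i<m. b i * y0 i) \<le> f t" if "t > 0" for t
    unfolding fF using y0F[OF that] by (rule SUP_upper2) simp
  have upper: "f t \<le> ereal (frob C X0 + (t * \<alpha>) * frob (mat 1) X0)" for t
    unfolding fF
  proof (rule SUP_least)
    fix y assume "y \<in> F t"
    hence ps: "psd (Lmap C A m y + (t * \<alpha>) *\<^sub>R mat 1)" unfolding F_def by simp
    have "0 \<le> frob (Lmap C A m y + (t * \<alpha>) *\<^sub>R mat 1) X0"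
      using psd_selfdual[OF ps] X0 unfolding primal_feasible_def by simp
    also have "\<dots> = frob (Lmap C A m y) X0 + (t * \<alpha>) * frob (mat 1) X0"
      using frob_add2 frob_scale2 frob_comm by metis
    finally show "ereal (\<Sum>i<m. b i * y i) \<le> ereal (frob C X0 + (t * \<alpha>) * frob (mat 1) X0)"
      using bty_eq[OF X0, of y] by simp
  qed
  have mono: "f t1 \<le> f t2" if "0 < t1" "t1 \<le> t2" for t1 t2
  proof -
    have "F t1 \<subseteq> F t2" unfolding F_def
      using psd_shift[of "Lmap C A m _" "t1 * \<alpha>" "t2 * \<alpha>"] that ap
      by (auto intro: mult_right_mono)
    thus ?thesis unfolding fF by (rule SUP_subset_mono) simp
  qed
  define Lim where "Lim = (INF t\<in>{0<..}. f t)"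
  have Llow: "ereal (\<Sum>i<m. b i * y0 i) \<le> Lim" unfolding Lim_def
    by (rule INF_greatest) (use lower in auto)
  have Lup: "Lim \<le> ereal (frob C X0 + (1 * \<alpha>) * frob (mat 1) X0)" unfolding Lim_def
    by (rule INF_lower2[of 1]) (use upper[of 1] in auto)
  obtain l where l: "Lim = ereal l" using Llow Lup by (cases Lim) auto
  have "(f \<longlongrightarrow> Lim) (at_right 0)"
  proof (rule order_tendstoI)
    fix a assume "a < Lim"
    have "\<forall>t>0. a < f t" using \<open>a < Lim\<close> unfolding Lim_def
      by (metis greaterThan_iff INF_lower less_le_trans)
    thus "eventually (\<lambda>t. a < f t) (at_right 0)"
      unfolding eventually_at_right_field by (intro exI[of _ 1]) auto
  next
    fix a assume "Lim < a"
    then obtain t0 where t0: "t0 > 0" "f t0 < a" unfolding Lim_def by (auto simp: INF_less_iff)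
    have "\<forall>t>0. t < t0 \<longrightarrow> f t < a" using mono t0 by (meson le_less le_less_trans)
    thus "eventually (\<lambda>t. f t < a) (at_right 0)"
      unfolding eventually_at_right_field using t0 by blast
  qed
  thus "\<exists>l::real. ((\<lambda>t. u2 C A m b R K \<alpha> t) \<longlongrightarrow> ereal l) (at_right 0)"
    using l unfolding f_def by blast
qed

end
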